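(* Let $t_0\in\mathbb{R}$, $\nu>0$, $D\ge0$, $\delta\ge0$, $S_0\ge0$, $R_0\ge0$, $I_0\ge0$. Let $\tau:[t_0,+\infty)\to[0,+\infty)$ be continuous with $|\tau(t)|\le\tau_{\max}$ for some $\tau_{\max}>0$. Let $\beta:[0,+\infty)\to[0,1]$ be measurable and continuous, with $\beta(a)=0$ for all $a\ge a_+$ for some $a_+>0$, and set $\Gamma(a)=e^{-(\nu+D)a}\beta(a)$ for $a\ge0$. Let $p:[0,+\infty)\to[0,+\infty)$ be integrable with $\int_0^{+\infty}p=1$ and, for $\kappa>0$, let $$\Lambda_\kappa(t)=e^{-(\nu+D)(t-t_0)}\int_0^{+\infty}\beta(a+(t-t_0))\,I_0\kappa p(\kappa a)\,da,\qquad t\ge t_0.$$ For a continuous function $x$ on $[t_0,+\infty)$ define $$F(x)(t)=S_0-\int_{t_0}^{t}\Big[x(m)-\delta R_x(m)\Big]dm,$$ $$R_x(m)=e^{-\delta(m-t_0)}R_0+\nu\int_{t_0}^{m}e^{-\delta(m-s)}\Big[e^{-(\nu+D)(s-t_0)}I_0+\int_0^{s-t_0}e^{-(\nu+D)a}x(s-a)\,da\Big]ds.$$ Assume that for every $\kappa$ there is a continuous function $N_\kappa$ on $[t_0,+\infty)$ with $|N_\kappa(t)|\le 2\tau_{\max}S_0I_0$ for all $t$ satisfying $$N_\kappa(t)=\tau(t)\,F(N_\kappa)(t)\Big[\Lambda_\kappa(t)+\int_0^{t-t_0}\beta(a)e^{-(\nu+D)a}N_\kappa(t-a)\,da\Big],\qquad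 t\ge t_0.$$ Then $N(t)=\lim_{\kappa\to\infty}N_\kappa(t)$ exists, the limit being uniform in $t$ on every closed and bounded subinterval of $[t_0,+\infty)$, and $t\mapsto N(t)$ is the unique continuous solution of the Volterra integral equation $$N(t)=\tau(t)\,F(N)(t)\Big[I_0\,\Gamma(t-t_0)+\int_0^{t-t_0}\Gamma(a)N(t-a)\,da\Big],\qquad t\ge t_0.$$
   Context: This concerns the infection-age-structured SIRS (Kermack–McKendrick type) model $S'=-\tau S\int_0^\infty\beta(a)i(t,a)da+\delta R$, $\partial_t i+\partial_a i=-(\nu+D)i$, $R'=\nu\int_0^\infty i\,da-\delta R$, $i(t,0)=\tau S\int_0^\infty\beta i\,da$, where $N(t)$ is the flow of newly infected individuals, $F(N)(t)$ is the number of susceptibles $S(t)$, $\delta$ the rate of loss of immunity, and the initial distribution of infected individuals is approximated by $I_0\kappa p(\kappa a)$, which tends as $\kappa\to\infty$ to a single cohort $I_0\delta_0$ (all $I_0$ infected at infection age $0$ at time $t_0$). *)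

theory Defs
  imports "HOL-Analysis.Analysis"
begin

text \<open>Integrals are Henstock--Kurzweil integrals ('integral'); on [t0,t] the
integrands are continuous, so this coincides with the Lebesgue integral.\<close>

definition Gamma_fn :: "real \<Rightarrow> real \<Rightarrow> (real \<Rightarrow> real) \<Rightarrow> real \<Rightarrow> real" where
  "Gamma_fn \<nu> D \<beta> a = exp (-(\<nu> + D) * a) * \<beta> a"

definition Lambda_fn :: "real \<Rightarrow> real \<Rightarrow> real \<Rightarrow> real \<Rightarrow> (real \<Rightarrow> real) \<Rightarrow> (real \<Rightarrow> real)
    \<Rightarrow> real \<Rightarrow> real \<Rightarrow> real" where
  "Lambda_fn t0 \<nu> D I0 \<beta> p \<kappa> t =
     exp (-(\<nu> + D) * (t - t0)) *
     integral {0..} (\<lambda>a. \<beta> (a + (t - t0)) * (I0 * \<kappa> * p (\<kappa> * a)))"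

definition R_fn :: "real \<Rightarrow> real \<Rightarrow> real \<Rightarrow> real \<Rightarrow> real \<Rightarrow> real \<Rightarrow> (real \<Rightarrow> real)
    \<Rightarrow> real \<Rightarrow> real" where
  "R_fn t0 \<nu> D \<delta> R0 I0 x m =
     exp (-\<delta> * (m - t0)) * R0 +
     \<nu> * integral {t0..m} (\<lambda>s. exp (-\<delta> * (m - s)) *
        (exp (-(\<nu> + D) * (s - t0)) * I0 +
         integral {0..s - t0} (\<lambda>a. exp (-(\<nu> + D) * a) * x (s - a))))"

definition F_op :: "real \<Rightarrow> real \<Rightarrow> real \<Rightarrow> real \<Rightarrow> real \<Rightarrow> real \<Rightarrow> real \<Rightarrow> (real \<Rightarrow> real)
    \<Rightarrow> real \<Rightarrow> real" where
  "F_op t0 \<nu> D \<delta> S0 R0 I0 x t =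
     S0 - integral {t0..t} (\<lambda>m. x m - \<delta> * R_fn t0 \<nu> D \<delta> R0 I0 x m)"

end

theory Submission
  imports Defs
begin


lemma cont_global:
  fixes f :: "real \<Rightarrow> real"
  assumes "\<And>T. T \<ge> t0 \<Longrightarrow> continuous_on {t0..T} f"
  shows "continuous_on {t0..} f"
proof -
  have "continuous (at t within {t0..}) f" if "t \<ge> t0" for t
  proof -
    have "continuous_on {t0..t+1} f" using assms that by simp
    then have "continuous (at t within {t0..t+1}) f"
      using that unfolding continuous_on_eq_continuous_within by simp
    moreover have "at t within {t0..} = at t within {t0..t+1}"
      by (rule at_within_nhd[where S="{..<t+1}"]) auto
    ultimately show ?thesis by simp
  qed
  then show ?thesis using continuous_on_eq_continuous_within by fastforce
qed

lemma subst_conv: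
  fixes k x :: "real \<Rightarrow> real"
  assumes k: "continuous_on {0..} k" and x: "continuous_on {t0..} x" and t: "t0 \<le> t"
  shows "integral {0..t-t0} (\<lambda>a. k a * x (t-a)) = integral {t0..t} (\<lambda>u. k (t-u) * x u)"
    and "(\<lambda>a. k a * x (t-a)) integrable_on {0..t-t0}"
    and "(\<lambda>u. k (t-u) * x u) integrable_on {t0..t}"
    and "continuous_on {t0..t} (\<lambda>u. k (t-u) * x u)"
proof -
  show c1: "continuous_on {t0..t} (\<lambda>u. k (t-u) * x u)"
    by (intro continuous_intros continuous_on_compose2[OF k] continuous_on_subset[OF x]) auto
  then show i1: "(\<lambda>u. k (t-u) * x u) integrable_on {t0..t}"
    by (rule integrable_continuous_interval)
  have "((\<lambda>u. k (t-u) * x u) has_integral integral {t0..t} (\<lambda>u. k (t-u) * x u)) (cbox t0 t)"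
    using i1 by (simp add: integrable_integral)
  from has_integral_affinity[OF this, of "-1" t]
  have "((\<lambda>y. k (t - ((-1) *\<^sub>R y + t)) * x ((-1) *\<^sub>R y + t)) has_integral integral {t0..t} (\<lambda>u. k (t-u) * x u))
     ((\<lambda>y. (1 / -1) *\<^sub>R y + - ((1 / -1) *\<^sub>R t)) ` cbox t0 t)" by simp
  moreover have "((\<lambda>y. (1 / -1) *\<^sub>R y + - ((1 / -1) *\<^sub>R t)) ` cbox t0 t) = {0..t-t0}"
  proof -
    have "y \<in> (\<lambda>y. - y + t) ` {t0..t}" if "y \<in> {0..t-t0}" for y
      using that by (intro rev_image_eqI[of "t - y"]) auto
    then show ?thesis by auto
  qed
  moreover have "(\<lambda>y. k (t - ((-1) *\<^sub>R y + t)) * x ((-1) *\<^sub>R y + t)) = (\<lambda>a. k a * x (t-a))"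
    by (rule ext) simp
  ultimately have H: "((\<lambda>a. k a * x (t-a)) has_integral integral {t0..t} (\<lambda>u. k (t-u) * x u)) {0..t-t0}"
    by simp
  then show "integral {0..t-t0} (\<lambda>a. k a * x (t-a)) = integral {t0..t} (\<lambda>u. k (t-u) * x u)"
    and "(\<lambda>a. k a * x (t-a)) integrable_on {0..t-t0}"
    using integral_unique[OF H] has_integral_integrable[OF H] by simp_all
qed

lemma exp_int_bound:
  fixes f :: "real \<Rightarrow> real"
  assumes f: "f integrable_on {t0..t}" and t: "t0 \<le> t" and l: "l > 0" and W: "W \<ge> 0"
    and b: "\<And>s. s \<in> {t0..t} \<Longrightarrow> \<bar>f s\<bar> \<le> W * exp (l*(s-t0))"
  shows "\<bar>integral {t0..t} f\<bar> \<le> W * exp (l*(t-t0)) / l"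
proof -
  have d: "((\<lambda>s. W * exp (l*(s-t0)) / l) has_vector_derivative W * exp (l*(s-t0))) (at s within {t0..t})" for s
    unfolding has_real_derivative_iff_has_vector_derivative[symmetric]
    using l by (auto intro!: derivative_eq_intros)
  have I: "((\<lambda>s. W * exp (l*(s-t0))) has_integral (W * exp (l*(t-t0)) / l - W * exp (l*(t0-t0)) / l)) {t0..t}"
    by (rule fundamental_theorem_of_calculus[OF t]) (use d in auto)
  have "\<bar>integral {t0..t} f\<bar> \<le> integral {t0..t} (\<lambda>s. W * exp (l*(s-t0)))"
    using integral_norm_bound_integral[OF f has_integral_integrable[OF I]] b by auto
  also have "\<dots> = W * exp (l*(t-t0)) / l - W / l" using integral_unique[OF I] by simp
  also have "\<dots> \<le> W * exp (l*(t-t0)) / l" using W l by simp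
  finally show ?thesis .
qed

lemma conv_diff_est:
  fixes k x y :: "real \<Rightarrow> real"
  assumes k: "continuous_on {0..} k" "\<And>a. a \<ge> 0 \<Longrightarrow> \<bar>k a\<bar> \<le> 1"
    and x: "continuous_on {t0..} x" and y: "continuous_on {t0..} y" and t: "t0 \<le> t"
    and l: "l > 0" and W: "W \<ge> 0" and b: "\<And>s. s \<in> {t0..t} \<Longrightarrow> \<bar>x s - y s\<bar> \<le> W * exp (l*(s-t0))"
  shows "\<bar>integral {0..t-t0} (\<lambda>a. k a * x (t-a)) - integral {0..t-t0} (\<lambda>a. k a * y (t-a))\<bar> \<le> W * exp (l*(t-t0)) / l"
proof -
  note sx = subst_conv[OF k(1) x t] and sy = subst_conv[OF k(1) y t]
  have "integral {0..t-t0} (\<lambda>a. k a * x (t-a)) - integral {0..t-t0} (\<lambda>a. k a * y (t-a))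
      = integral {t0..t} (\<lambda>u. k (t-u) * x u - k (t-u) * y u)"
    using sx sy by (simp add: integral_diff)
  moreover have "\<bar>integral {t0..t} (\<lambda>u. k (t-u) * x u - k (t-u) * y u)\<bar> \<le> W * exp (l*(t-t0)) / l"
  proof (rule exp_int_bound[OF integrable_diff[OF sx(3) sy(3)] t l W])
    fix s assume s: "s \<in> {t0..t}"
    have "\<bar>k (t-s) * x s - k (t-s) * y s\<bar> = \<bar>k (t-s)\<bar> * \<bar>x s - y s\<bar>"
      by (simp add: abs_mult[symmetric] right_diff_distrib)
    also have "\<dots> \<le> 1 * (W * exp (l*(s-t0)))"
      using k(2)[of "t-s"] s b[OF s] by (intro mult_mono) auto
    finally show "\<bar>k (t-s) * x s - k (t-s) * y s\<bar> \<le> W * exp (l*(s-t0))" by simp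
  qed
  ultimately show ?thesis by simp
qed

lemma conv_bound:
  fixes k x :: "real \<Rightarrow> real"
  assumes k: "continuous_on {0..} k" "\<And>a. a \<ge> 0 \<Longrightarrow> \<bar>k a\<bar> \<le> 1"
    and x: "continuous_on {t0..} x" and t: "t0 \<le> t" and K: "\<And>s. s \<in> {t0..t} \<Longrightarrow> \<bar>x s\<bar> \<le> K"
  shows "\<bar>integral {0..t-t0} (\<lambda>a. k a * x (t-a))\<bar> \<le> K * (t-t0)"
proof -
  note sx = subst_conv[OF k(1) x t]
  have "norm (integral {t0..t} (\<lambda>u. k (t-u) * x u)) \<le> K * (t - t0)"
  proof (rule integral_bound[OF t sx(4)])
    fix s assume s: "s \<in> {t0..t}"
    have "\<bar>k (t-s) * x s\<bar> = \<bar>k (t-s)\<bar> * \<bar>x s\<bar>" by (simp add: abs_mult)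
    also have "\<dots> \<le> 1 * K"
      using k(2)[of "t-s"] s K[OF s] by (intro mult_mono) auto
    finally show "norm (k (t-s) * x s) \<le> K" by simp
  qed
  then show ?thesis using sx(1) by simp
qed

lemma cont_conv2:
  fixes G :: "real \<Rightarrow> real"
  assumes G: "continuous_on {t0..} G"
  shows "continuous_on {t0..} (\<lambda>m. integral {t0..m} (\<lambda>s. exp (q*(m-s)) * G s))"
proof (rule cont_global)
  fix T assume T: "T \<ge> t0"
  have "continuous_on {t0..T} (\<lambda>m. exp (q*m) * integral {t0..m} (\<lambda>s. exp ((- q) * s) * G s))"
    by (intro continuous_intros indefinite_integral_continuous_1 integrable_continuous_interval
        continuous_on_subset[OF G]) auto
  moreover have "exp (q*m) * integral {t0..m} (\<lambda>s. exp ((- q) * s) * G s) = integral {t0..m} (\<lambda>s. exp (q*(m-s)) * G s)" for m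
  proof -
    have "exp (q*m) * integral {t0..m} (\<lambda>s. exp ((- q) * s) * G s) = integral {t0..m} (\<lambda>s. exp (q*m) * (exp ((- q) * s) * G s))"
      by simp
    also have "\<dots> = integral {t0..m} (\<lambda>s. exp (q*(m-s)) * G s)"
    proof (rule integral_cong)
      fix s
      have "exp (q*m) * exp ((- q) * s) = exp (q*(m-s))" by (simp add: exp_add[symmetric] algebra_simps)
      then show "exp (q*m) * (exp ((- q) * s) * G s) = exp (q*(m-s)) * G s" by (simp add: mult.assoc[symmetric])
    qed
    finally show ?thesis .
  qed
  ultimately show "continuous_on {t0..T} (\<lambda>m. integral {t0..m} (\<lambda>s. exp (q*(m-s)) * G s))"
    by (rule continuous_on_eq) 
qed

lemma cont_conv:
  fixes x :: "real \<Rightarrow> real"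
  assumes x: "continuous_on {t0..} x"
  shows "continuous_on {t0..} (\<lambda>s. integral {0..s-t0} (\<lambda>a. exp (q*a) * x (s-a)))"
proof (rule continuous_on_eq[OF cont_conv2[OF x, of q]])
  fix s :: real assume "s \<in> {t0..}"
  then show "integral {t0..s} (\<lambda>u. exp (q*(s-u)) * x u) = integral {0..s-t0} (\<lambda>a. exp (q*a) * x (s-a))"
  proof -
    have "continuous_on {0..} (\<lambda>a. exp (q*a))" by (intro continuous_intros)
    from subst_conv(1)[OF this x] show ?thesis using \<open>s \<in> {t0..}\<close> by simp
  qed
qed



lemma R_eq: "R_fn t0 \<nu> D \<delta> R0 I0 x = (\<lambda>m. exp (-\<delta>*(m-t0)) * R0 + \<nu> * integral {t0..m} (\<lambda>s. exp (-\<delta>*(m-s)) *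
   (exp (-(\<nu>+D)*(s-t0)) * I0 + integral {0..s-t0} (\<lambda>a. exp (-(\<nu>+D)*a) * x (s-a)))))"
  by (rule ext) (simp add: R_fn_def)

lemma exp_nonpos_le1:
  fixes c a :: real
  assumes "c \<ge> 0" "a \<ge> 0"
  shows "exp (-c*a) \<le> 1"
proof -
  have "-c*a \<le> 0" by (rule mult_nonpos_nonneg) (use assms in auto)
  then show ?thesis by simp
qed

lemma abs_aux:
  fixes d a b x y :: real
  assumes "d \<ge> 0"
  shows "\<bar>(y - d*b) - (x - d*a)\<bar> \<le> \<bar>x - y\<bar> + d*\<bar>a - b\<bar>"
proof -
  have e: "(y - d*b) - (x - d*a) = (y - x) + d*(a-b)" by (simp add: algebra_simps)
  have "\<bar>d*(a-b)\<bar> = d*\<bar>a-b\<bar>" using assms by (simp add: abs_mult)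
  moreover have "\<bar>(y - x) + d*(a-b)\<bar> \<le> \<bar>y - x\<bar> + \<bar>d*(a-b)\<bar>" by (rule abs_triangle_ineq)
  ultimately show ?thesis unfolding e by (simp add: abs_minus_commute)
qed

lemma G_cont:
  fixes \<nu> D I0 t0 :: real and x :: "real \<Rightarrow> real"
  assumes "continuous_on {t0..} x"
  shows "continuous_on {t0..} (\<lambda>s. exp (-(\<nu>+D)*(s-t0)) * I0 + integral {0..s-t0} (\<lambda>a. exp (-(\<nu>+D)*a) * x (s-a)))"
proof -
  have 1: "continuous_on {t0..} (\<lambda>s. exp (-(\<nu>+D)*(s-t0)) * I0)" by (intro continuous_intros)
  show ?thesis using continuous_on_add[OF 1 cont_conv[OF assms, of "-(\<nu>+D)"]] by simp
qed

lemma R_cont: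
  assumes "continuous_on {t0..} x"
  shows "continuous_on {t0..} (R_fn t0 \<nu> D \<delta> R0 I0 x)"
  unfolding R_eq by (intro continuous_intros cont_conv2 G_cont assms)

lemma Fint_cont:
  assumes "continuous_on {t0..} x"
  shows "continuous_on {t0..} (\<lambda>m. x m - \<delta> * R_fn t0 \<nu> D \<delta> R0 I0 x m)"
  using R_cont[OF assms] assms by (intro continuous_intros) auto

lemma kexp:
  fixes \<nu> D :: real
  assumes "\<nu> + D \<ge> 0"
  shows "continuous_on {0..} (\<lambda>a. exp (-(\<nu>+D)*a))" "\<And>a. a \<ge> 0 \<Longrightarrow> \<bar>exp (-(\<nu>+D)*a)\<bar> \<le> 1"
proof -
  show "continuous_on {0..} (\<lambda>a. exp (-(\<nu>+D)*a))" by (intro continuous_intros)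
  fix a :: real assume "a \<ge> 0"
  then show "\<bar>exp (-(\<nu>+D)*a)\<bar> \<le> 1" using exp_nonpos_le1[OF assms] by simp
qed

lemma R_split:
  "R_fn t0 \<nu> D \<delta> R0 I0 x m = exp (-\<delta>*(m-t0)) * R0 + \<nu> * integral {t0..m} (\<lambda>s. exp (-\<delta>*(m-s)) * G s)"
  if "G = (\<lambda>s. exp (-(\<nu>+D)*(s-t0)) * I0 + integral {0..s-t0} (\<lambda>a. exp (-(\<nu>+D)*a) * x (s-a)))"
  using that by (simp add: R_fn_def)

lemma R_diff:
  fixes x y :: "real \<Rightarrow> real"
  assumes par: "\<nu> \<ge> 0" "\<nu> + D \<ge> 0" "\<delta> \<ge> 0"
    and x: "continuous_on {t0..} x" and y: "continuous_on {t0..} y" and m: "t0 \<le> m"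
    and l: "l > 0" and W: "W \<ge> 0" and b: "\<And>s. s \<in> {t0..m} \<Longrightarrow> \<bar>x s - y s\<bar> \<le> W * exp (l*(s-t0))"
  shows "\<bar>R_fn t0 \<nu> D \<delta> R0 I0 x m - R_fn t0 \<nu> D \<delta> R0 I0 y m\<bar> \<le> \<nu> * ((W / l) * exp (l*(m-t0)) / l)"
proof -
  define Gx where "Gx = (\<lambda>s. exp (-(\<nu>+D)*(s-t0)) * I0 + integral {0..s-t0} (\<lambda>a. exp (-(\<nu>+D)*a) * x (s-a)))"
  define Gy where "Gy = (\<lambda>s. exp (-(\<nu>+D)*(s-t0)) * I0 + integral {0..s-t0} (\<lambda>a. exp (-(\<nu>+D)*a) * y (s-a)))"
  have cGx: "continuous_on {t0..} Gx" unfolding Gx_def by (rule G_cont[OF x])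
  have cGy: "continuous_on {t0..} Gy" unfolding Gy_def by (rule G_cont[OF y])
  have ix: "(\<lambda>s. exp (-\<delta>*(m-s)) * Gx s) integrable_on {t0..m}"
    by (intro integrable_continuous_interval continuous_intros continuous_on_subset[OF cGx]) auto
  have iy: "(\<lambda>s. exp (-\<delta>*(m-s)) * Gy s) integrable_on {t0..m}"
    by (intro integrable_continuous_interval continuous_intros continuous_on_subset[OF cGy]) auto
  have "R_fn t0 \<nu> D \<delta> R0 I0 x m - R_fn t0 \<nu> D \<delta> R0 I0 y m
     = \<nu> * integral {t0..m} (\<lambda>s. exp (-\<delta>*(m-s)) * Gx s - exp (-\<delta>*(m-s)) * Gy s)"
    unfolding R_split[OF Gx_def] R_split[OF Gy_def] integral_diff[OF ix iy] by (simp add: algebra_simps)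
  moreover have "\<bar>integral {t0..m} (\<lambda>s. exp (-\<delta>*(m-s)) * Gx s - exp (-\<delta>*(m-s)) * Gy s)\<bar> \<le> (W / l) * exp (l*(m-t0)) / l"
  proof (rule exp_int_bound[OF integrable_diff[OF ix iy] m l])
    show "W / l \<ge> 0" using W l by simp
    fix s assume s: "s \<in> {t0..m}"
    have "\<bar>Gx s - Gy s\<bar> \<le> W * exp (l*(s-t0)) / l"
    proof -
      have "Gx s - Gy s = integral {0..s-t0} (\<lambda>a. exp (-(\<nu>+D)*a) * x (s-a)) - integral {0..s-t0} (\<lambda>a. exp (-(\<nu>+D)*a) * y (s-a))"
        unfolding Gx_def Gy_def by simp
      also have "\<bar>\<dots>\<bar> \<le> W * exp (l*(s-t0)) / l"
        by (rule conv_diff_est[OF kexp[OF par(2)] x y _ l W]) (use s b in auto)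
      finally show ?thesis .
    qed
    moreover
    have "exp (-\<delta>*(m-s)) * Gx s - exp (-\<delta>*(m-s)) * Gy s = exp (-\<delta>*(m-s)) * (Gx s - Gy s)"
      by (simp only: right_diff_distrib)
    then have A: "\<bar>exp (-\<delta>*(m-s)) * Gx s - exp (-\<delta>*(m-s)) * Gy s\<bar> = exp (-\<delta>*(m-s)) * \<bar>Gx s - Gy s\<bar>"
      by (simp only: abs_mult abs_exp_cancel)
    moreover have C: "exp (-\<delta>*(m-s)) \<le> 1" using s par exp_nonpos_le1[of \<delta> "m-s"] by simp
    ultimately have "\<bar>exp (-\<delta>*(m-s)) * Gx s - exp (-\<delta>*(m-s)) * Gy s\<bar> \<le> 1 * (W * exp (l*(s-t0)) / l)"
      using mult_mono[OF C _ zero_le_one abs_ge_zero] by simp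
    then show "\<bar>exp (-\<delta>*(m-s)) * Gx s - exp (-\<delta>*(m-s)) * Gy s\<bar> \<le> W / l * exp (l*(s-t0))" by simp
  qed
  ultimately show ?thesis using mult_left_mono[OF _ par(1)] par(1) by (simp add: abs_mult times_divide_eq_right[symmetric] del: times_divide_eq_right)
qed

lemma F_diff:
  fixes x y :: "real \<Rightarrow> real"
  assumes par: "\<nu> \<ge> 0" "\<nu> + D \<ge> 0" "\<delta> \<ge> 0"
    and x: "continuous_on {t0..} x" and y: "continuous_on {t0..} y" and t: "t0 \<le> t"
    and l: "l > 0" and W: "W \<ge> 0" and b: "\<And>s. s \<in> {t0..t} \<Longrightarrow> \<bar>x s - y s\<bar> \<le> W * exp (l*(s-t0))"
  shows "\<bar>F_op t0 \<nu> D \<delta> S0 R0 I0 x t - F_op t0 \<nu> D \<delta> S0 R0 I0 y t\<bar> \<le> (1 + \<delta>*\<nu>/l^2) * W * exp (l*(t-t0)) / l"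
proof -
  let ?fx = "\<lambda>m. x m - \<delta> * R_fn t0 \<nu> D \<delta> R0 I0 x m"
  let ?fy = "\<lambda>m. y m - \<delta> * R_fn t0 \<nu> D \<delta> R0 I0 y m"
  have ix: "?fx integrable_on {t0..t}"
    by (intro integrable_continuous_interval continuous_on_subset[OF Fint_cont[OF x]]) auto
  have iy: "?fy integrable_on {t0..t}"
    by (intro integrable_continuous_interval continuous_on_subset[OF Fint_cont[OF y]]) auto
  have "F_op t0 \<nu> D \<delta> S0 R0 I0 x t - F_op t0 \<nu> D \<delta> S0 R0 I0 y t = integral {t0..t} (\<lambda>m. ?fy m - ?fx m)"
    unfolding F_op_def integral_diff[OF iy ix] by simp
  moreover have "\<bar>integral {t0..t} (\<lambda>m. ?fy m - ?fx m)\<bar> \<le> ((1 + \<delta>*\<nu>/l^2) * W) * exp (l*(t-t0)) / l"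
  proof (rule exp_int_bound[OF integrable_diff[OF iy ix] t l])
    show "(1 + \<delta>*\<nu>/l^2) * W \<ge> 0" using par W by simp
    fix s assume s: "s \<in> {t0..t}"
    have r: "\<bar>R_fn t0 \<nu> D \<delta> R0 I0 x s - R_fn t0 \<nu> D \<delta> R0 I0 y s\<bar> \<le> \<nu> * ((W / l) * exp (l*(s-t0)) / l)"
      by (rule R_diff[OF par x y _ l W]) (use s b in auto)
    have "\<bar>?fy s - ?fx s\<bar> \<le> \<bar>x s - y s\<bar> + \<delta> * \<bar>R_fn t0 \<nu> D \<delta> R0 I0 x s - R_fn t0 \<nu> D \<delta> R0 I0 y s\<bar>"
      by (rule abs_aux[OF par(3)])
    also have "\<dots> \<le> W * exp (l*(s-t0)) + \<delta> * (\<nu> * ((W / l) * exp (l*(s-t0)) / l))"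
      using b[OF s] r par(3) by (intro add_mono mult_left_mono) auto
    also have "\<dots> = (1 + \<delta>*\<nu>/l^2) * W * exp (l*(s-t0))"
      using l by (simp add: field_simps power2_eq_square)
    finally show "\<bar>?fy s - ?fx s\<bar> \<le> (1 + \<delta>*\<nu>/l^2) * W * exp (l*(s-t0))" .
  qed
  ultimately show ?thesis by simp
qed

lemma F_bound:
  fixes x :: "real \<Rightarrow> real"
  assumes par: "\<nu> \<ge> 0" "\<nu> + D \<ge> 0" "\<delta> \<ge> 0" "S0 \<ge> 0" "R0 \<ge> 0" "I0 \<ge> 0"
    and x: "continuous_on {t0..} x" and t: "t0 \<le> t" "t \<le> T" and K: "K \<ge> 0"
    and b: "\<And>s. s \<in> {t0..T} \<Longrightarrow> \<bar>x s\<bar> \<le> K"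
  shows "\<bar>F_op t0 \<nu> D \<delta> S0 R0 I0 x t\<bar> \<le> S0 + (T-t0) * (K + \<delta> * (R0 + \<nu> * (T-t0) * (I0 + K*(T-t0))))"
proof -
  define Gx where "Gx = (\<lambda>s. exp (-(\<nu>+D)*(s-t0)) * I0 + integral {0..s-t0} (\<lambda>a. exp (-(\<nu>+D)*a) * x (s-a)))"
  have cGx: "continuous_on {t0..} Gx" unfolding Gx_def by (rule G_cont[OF x])
  have Gb: "\<bar>Gx s\<bar> \<le> I0 + K*(T-t0)" if s: "s \<in> {t0..T}" for s
  proof -
    have "\<bar>integral {0..s-t0} (\<lambda>a. exp (-(\<nu>+D)*a) * x (s-a))\<bar> \<le> K * (s-t0)"
      by (rule conv_bound[OF kexp[OF par(2)] x]) (use s b in auto)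
    also have "\<dots> \<le> K * (T-t0)" using s K by (intro mult_left_mono) auto
    finally have 1: "\<bar>integral {0..s-t0} (\<lambda>a. exp (-(\<nu>+D)*a) * x (s-a))\<bar> \<le> K * (T-t0)" .
    have "exp (-(\<nu>+D)*(s-t0)) \<le> 1" using s par exp_nonpos_le1[of "\<nu>+D" "s-t0"] by simp
    then have 2: "\<bar>exp (-(\<nu>+D)*(s-t0)) * I0\<bar> \<le> I0" using par(6)
      by (simp add: abs_mult mult_left_le_one_le)
    have "\<bar>Gx s\<bar> \<le> \<bar>exp (-(\<nu>+D)*(s-t0)) * I0\<bar> + \<bar>integral {0..s-t0} (\<lambda>a. exp (-(\<nu>+D)*a) * x (s-a))\<bar>"
      unfolding Gx_def by (rule abs_triangle_ineq)
    then show ?thesis using 1 2 by linarith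
  qed
  define RB where "RB = R0 + \<nu> * (T-t0) * (I0 + K*(T-t0))"
  have Rb: "\<bar>R_fn t0 \<nu> D \<delta> R0 I0 x m\<bar> \<le> RB" if m: "m \<in> {t0..T}" for m
  proof -
    have "norm (integral {t0..m} (\<lambda>s. exp (-\<delta>*(m-s)) * Gx s)) \<le> (I0 + K*(T-t0)) * (m - t0)"
    proof (rule integral_bound)
      show "t0 \<le> m" using m by simp
      show "continuous_on {t0..m} (\<lambda>s. exp (-\<delta>*(m-s)) * Gx s)"
        by (intro continuous_intros continuous_on_subset[OF cGx]) auto
      fix s assume s: "s \<in> {t0..m}"
      have "exp (-\<delta>*(m-s)) \<le> 1" using s par exp_nonpos_le1[of \<delta> "m-s"] by simp
      moreover have "\<bar>Gx s\<bar> \<le> I0 + K*(T-t0)" using Gb[of s] s m by auto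
      ultimately show "norm (exp (-\<delta>*(m-s)) * Gx s) \<le> I0 + K*(T-t0)"
        using mult_mono[of "exp (-\<delta>*(m-s))" 1 "\<bar>Gx s\<bar>" "I0 + K*(T-t0)"] by (simp add: abs_mult)
    qed
    also have "\<dots> \<le> (I0 + K*(T-t0)) * (T - t0)" using m par K by (intro mult_left_mono) auto
    finally have 1: "\<bar>integral {t0..m} (\<lambda>s. exp (-\<delta>*(m-s)) * Gx s)\<bar> \<le> (I0 + K*(T-t0)) * (T - t0)" by simp
    have "exp (-\<delta>*(m-t0)) \<le> 1" using m par exp_nonpos_le1[of \<delta> "m-t0"] by simp
    then have 2: "\<bar>exp (-\<delta>*(m-t0)) * R0\<bar> \<le> R0" using par(5)
      by (simp add: abs_mult mult_left_le_one_le)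
    have 3: "\<bar>\<nu> * integral {t0..m} (\<lambda>s. exp (-\<delta>*(m-s)) * Gx s)\<bar> \<le> \<nu> * ((I0 + K*(T-t0)) * (T - t0))"
      using 1 par(1) by (simp add: abs_mult mult_left_mono)
    have 4: "\<nu> * ((I0 + K*(T-t0)) * (T - t0)) = \<nu> * (T-t0) * (I0 + K*(T-t0))" by (simp add: algebra_simps)
    have "\<bar>R_fn t0 \<nu> D \<delta> R0 I0 x m\<bar> \<le> \<bar>exp (-\<delta>*(m-t0)) * R0\<bar> + \<bar>\<nu> * integral {t0..m} (\<lambda>s. exp (-\<delta>*(m-s)) * Gx s)\<bar>"
      unfolding R_split[OF Gx_def] by (rule abs_triangle_ineq)
    then show ?thesis unfolding RB_def using 2 3 4 by linarith
  qed
  have "norm (integral {t0..t} (\<lambda>m. x m - \<delta> * R_fn t0 \<nu> D \<delta> R0 I0 x m)) \<le> (K + \<delta> * RB) * (t - t0)"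
  proof (rule integral_bound[OF t(1)])
    show "continuous_on {t0..t} (\<lambda>m. x m - \<delta> * R_fn t0 \<nu> D \<delta> R0 I0 x m)"
      by (intro continuous_on_subset[OF Fint_cont[OF x]]) auto
    fix s assume s: "s \<in> {t0..t}"
    then have "\<bar>x s\<bar> \<le> K" "\<bar>R_fn t0 \<nu> D \<delta> R0 I0 x s\<bar> \<le> RB" using b Rb t by auto
    then have "\<bar>x s\<bar> + \<delta> * \<bar>R_fn t0 \<nu> D \<delta> R0 I0 x s\<bar> \<le> K + \<delta> * RB" using par(3) by (intro add_mono mult_left_mono) auto
    moreover have "\<bar>x s - \<delta> * R_fn t0 \<nu> D \<delta> R0 I0 x s\<bar> \<le> \<bar>x s\<bar> + \<delta> * \<bar>R_fn t0 \<nu> D \<delta> R0 I0 x s\<bar>"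
      using abs_triangle_ineq4[of "x s" "\<delta> * R_fn t0 \<nu> D \<delta> R0 I0 x s"] par(3) by (simp add: abs_mult)
    ultimately show "norm (x s - \<delta> * R_fn t0 \<nu> D \<delta> R0 I0 x s) \<le> K + \<delta> * RB" by simp
  qed
  also have "\<dots> \<le> (K + \<delta> * RB) * (T - t0)"
  proof (rule mult_left_mono)
    have "RB \<ge> 0" unfolding RB_def using par K t by (intro add_nonneg_nonneg mult_nonneg_nonneg) auto
    then show "K + \<delta> * RB \<ge> 0" using K par by simp
  qed (use t in auto)
  finally have "\<bar>integral {t0..t} (\<lambda>m. x m - \<delta> * R_fn t0 \<nu> D \<delta> R0 I0 x m)\<bar> \<le> (T - t0) * (K + \<delta> * RB)" by (simp add: mult.commute)
  moreover have "\<bar>F_op t0 \<nu> D \<delta> S0 R0 I0 x t\<bar> \<le> \<bar>S0\<bar> + \<bar>integral {t0..t} (\<lambda>m. x m - \<delta> * R_fn t0 \<nu> D \<delta> R0 I0 x m)\<bar>"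
    unfolding F_op_def by (rule abs_triangle_ineq4)
  ultimately show ?thesis unfolding RB_def[symmetric] using par(4) by linarith
qed



lemma prod_absint:
  fixes g p :: "real \<Rightarrow> real"
  assumes g: "continuous_on {0..} g" "\<And>b. b \<ge> 0 \<Longrightarrow> \<bar>g b\<bar> \<le> 1"
    and p: "p absolutely_integrable_on {0..}"
  shows "(\<lambda>b. g b * p b) absolutely_integrable_on {0..}"
proof (rule absolutely_integrable_bounded_measurable_product_real[OF _ _ _ p])
  show "{0::real..} \<in> sets lebesgue" by simp
  then show "g \<in> borel_measurable (lebesgue_on {0..})"
    by (rule continuous_imp_measurable_on_sets_lebesgue[OF g(1)])
  show "bounded (g ` {0..})" by (rule boundedI[where B=1]) (use g(2) in auto)
qed

lemma abs_int_integrable: "f absolutely_integrable_on S \<Longrightarrow> f integrable_on (S::real set)"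
  for f :: "real \<Rightarrow> real"
  by (simp add: absolutely_integrable_on_def)

lemma beta_shift_cont:
  fixes \<beta> :: "real \<Rightarrow> real"
  assumes b: "continuous_on {0..} \<beta>" and k: "\<kappa> > 0" and s: "s \<ge> 0"
  shows "continuous_on {0..} (\<lambda>b. \<beta> (b/\<kappa> + s))"
  by (rule continuous_on_compose2[OF b]) (use k s in \<open>auto intro!: continuous_intros\<close>)

lemma Lambda_change:
  fixes \<beta> p :: "real \<Rightarrow> real"
  assumes k: "\<kappa> > 0" and s: "s \<ge> 0" and b: "continuous_on {0..} \<beta>" "\<And>a. a \<ge> 0 \<Longrightarrow> \<bar>\<beta> a\<bar> \<le> 1"
    and p: "p absolutely_integrable_on {0..}"
  shows "integral {0..} (\<lambda>a. \<beta> (a + s) * (I0 * \<kappa> * p (\<kappa> * a))) = I0 * integral {0..} (\<lambda>b. \<beta> (b/\<kappa> + s) * p b)"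
    and "(\<lambda>b. \<beta> (b/\<kappa> + s) * p b) absolutely_integrable_on {0..}"
proof -
  show fi: "(\<lambda>b. \<beta> (b/\<kappa> + s) * p b) absolutely_integrable_on {0..}"
    by (rule prod_absint[OF beta_shift_cont[OF b(1) k s] _ p]) (use b(2) k s in auto)
  define f where "f = (\<lambda>b. I0 * (\<beta> (b/\<kappa> + s) * p b))"
  have fa: "f absolutely_integrable_on {0..}"
    unfolding f_def using absolutely_integrable_scaleR_left[OF fi, of I0] by simp
  have img: "(\<lambda>a. \<kappa> * a) ` {0..} = {0..}"
  proof -
    have "y \<in> (\<lambda>a. \<kappa> * a) ` {0..}" if "y \<ge> 0" for y
      using that k by (intro rev_image_eqI[of "y/\<kappa>"]) auto
    then show ?thesis using k by auto
  qed
  have der: "((\<lambda>a. \<kappa> * a) has_field_derivative \<kappa>) (at a within {0..})" for a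
    by (auto intro!: derivative_eq_intros)
  have inj: "inj_on (\<lambda>a. \<kappa> * a) {0..}" using k by (auto simp: inj_on_def)
  have "integral {0..} f = I0 * integral {0..} (\<lambda>b. \<beta> (b/\<kappa> + s) * p b)"
    unfolding f_def by simp
  with fa have fimg: "f absolutely_integrable_on ((\<lambda>a. \<kappa> * a) ` {0..}) \<and>
     integral ((\<lambda>a. \<kappa> * a) ` {0..}) f = I0 * integral {0..} (\<lambda>b. \<beta> (b/\<kappa> + s) * p b)"
    unfolding img by simp
  have "integral {0..} (\<lambda>a. \<bar>\<kappa>\<bar> * f (\<kappa> * a)) = I0 * integral {0..} (\<lambda>b. \<beta> (b/\<kappa> + s) * p b)"
  proof -
    have "((\<lambda>a. \<bar>\<kappa>\<bar> * f (\<kappa> * a)) absolutely_integrable_on {0..} \<and>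
        integral {0..} (\<lambda>a. \<bar>\<kappa>\<bar> * f (\<kappa> * a)) = I0 * integral {0..} (\<lambda>b. \<beta> (b/\<kappa> + s) * p b))
      \<longleftrightarrow> (f absolutely_integrable_on ((\<lambda>a. \<kappa> * a) ` {0..}) \<and>
        integral ((\<lambda>a. \<kappa> * a) ` {0..}) f = I0 * integral {0..} (\<lambda>b. \<beta> (b/\<kappa> + s) * p b))"
      by (rule has_absolute_integral_change_of_variables_1') (use der inj in auto)
    with fimg show ?thesis by blast
  qed
  moreover have "integral {0..} (\<lambda>a. \<bar>\<kappa>\<bar> * f (\<kappa> * a)) = integral {0..} (\<lambda>a. \<beta> (a + s) * (I0 * \<kappa> * p (\<kappa> * a)))"
    by (rule integral_cong) (use k in \<open>simp add: f_def\<close>)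
  ultimately show "integral {0..} (\<lambda>a. \<beta> (a + s) * (I0 * \<kappa> * p (\<kappa> * a))) = I0 * integral {0..} (\<lambda>b. \<beta> (b/\<kappa> + s) * p b)"
    by simp
qed

lemma J_bound:
  fixes \<beta> p :: "real \<Rightarrow> real"
  assumes k: "\<kappa> > 0" and s: "s \<ge> 0" and b: "continuous_on {0..} \<beta>" "\<And>a. a \<ge> 0 \<Longrightarrow> \<bar>\<beta> a\<bar> \<le> 1"
    and p: "p integrable_on {0..}" "\<And>a. a \<ge> 0 \<Longrightarrow> p a \<ge> 0" "integral {0..} p = 1"
  shows "\<bar>integral {0..} (\<lambda>b. \<beta> (b/\<kappa> + s) * p b)\<bar> \<le> 1"
proof -
  have pa: "p absolutely_integrable_on {0..}" by (rule nonnegative_absolutely_integrable_1[OF p(1)]) (use p(2) in auto)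
  have "norm (integral {0..} (\<lambda>b. \<beta> (b/\<kappa> + s) * p b)) \<le> integral {0..} p"
  proof (rule integral_norm_bound_integral[OF abs_int_integrable[OF Lambda_change(2)[OF k s b pa]] p(1)])
    fix x :: real assume x: "x \<in> {0..}"
    have "\<bar>\<beta> (x/\<kappa> + s)\<bar> \<le> 1" using b(2) k s x by auto
    then show "norm (\<beta> (x/\<kappa> + s) * p x) \<le> p x" using p(2)[of x] x
      by (simp add: abs_mult mult_left_le_one_le)
  qed
  then show ?thesis using p(3) by simp
qed

lemma beta_unif:
  fixes \<beta> :: "real \<Rightarrow> real"
  assumes b: "continuous_on {0..} \<beta>" and ap: "\<forall>a\<ge>aplus. \<beta> a = 0" and e: "e > 0"
  shows "\<exists>d>0. \<forall>u v. u \<ge> 0 \<longrightarrow> v \<ge> 0 \<longrightarrow> \<bar>u - v\<bar> < d \<longrightarrow> \<bar>\<beta> u - \<beta> v\<bar> < e"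
proof -
  have "uniformly_continuous_on {0..max 0 aplus + 1} \<beta>"
    by (rule compact_uniformly_continuous[OF continuous_on_subset[OF b]]) auto
  then obtain d0 where d0: "d0 > 0" "\<And>x x'. x \<in> {0..max 0 aplus + 1} \<Longrightarrow> x' \<in> {0..max 0 aplus + 1} \<Longrightarrow> dist x' x < d0 \<Longrightarrow> dist (\<beta> x') (\<beta> x) < e"
    unfolding uniformly_continuous_on_def using e by metis
  show ?thesis
  proof (intro exI[of _ "min d0 1"] conjI allI impI)
    show "min d0 1 > 0" using d0 by simp
    fix u v :: real assume uv: "u \<ge> 0" "v \<ge> 0" "\<bar>u - v\<bar> < min d0 1"
    show "\<bar>\<beta> u - \<beta> v\<bar> < e"
    proof (cases "u \<le> max 0 aplus + 1 \<and> v \<le> max 0 aplus + 1")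
      case True
      then show ?thesis using d0(2)[of v u] uv by (auto simp: dist_real_def)
    next
      case False
      then have "u \<ge> aplus" "v \<ge> aplus" using uv by auto
      then show ?thesis using ap e by auto
    qed
  qed
qed



lemma Lambda_bound:
  fixes \<beta> p :: "real \<Rightarrow> real"
  assumes k: "\<kappa> > 0" and t: "t0 \<le> t" and c: "\<nu> + D \<ge> 0" and I0: "I0 \<ge> 0"
    and b: "continuous_on {0..} \<beta>" "\<And>a. a \<ge> 0 \<Longrightarrow> \<bar>\<beta> a\<bar> \<le> 1"
    and p: "p integrable_on {0..}" "\<And>a. a \<ge> 0 \<Longrightarrow> p a \<ge> 0" "integral {0..} p = 1"
  shows "\<bar>Lambda_fn t0 \<nu> D I0 \<beta> p \<kappa> t\<bar> \<le> I0"
proof -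
  have pa: "p absolutely_integrable_on {0..}" by (rule nonnegative_absolutely_integrable_1[OF p(1)]) (use p(2) in auto)
  have s: "t - t0 \<ge> 0" using t by simp
  have L: "Lambda_fn t0 \<nu> D I0 \<beta> p \<kappa> t = exp (-(\<nu>+D)*(t-t0)) * (I0 * integral {0..} (\<lambda>b. \<beta> (b/\<kappa> + (t-t0)) * p b))"
    using Lambda_change(1)[OF k s b pa, of I0] unfolding Lambda_fn_def by simp
  have e: "exp (-(\<nu>+D)*(t-t0)) \<le> 1" using exp_nonpos_le1[OF c s] by simp
  have J: "\<bar>integral {0..} (\<lambda>b. \<beta> (b/\<kappa> + (t-t0)) * p b)\<bar> \<le> 1" by (rule J_bound[OF k s b p])
  have "\<bar>Lambda_fn t0 \<nu> D I0 \<beta> p \<kappa> t\<bar> = exp (-(\<nu>+D)*(t-t0)) * (I0 * \<bar>integral {0..} (\<lambda>b. \<beta> (b/\<kappa> + (t-t0)) * p b)\<bar>)"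
    unfolding L using I0 by (simp add: abs_mult)
  also have "\<dots> \<le> 1 * (I0 * 1)"
    using e J I0 by (intro mult_mono mult_left_mono) auto
  finally show ?thesis by simp
qed

lemma Lambda_conv:
  fixes \<beta> p :: "real \<Rightarrow> real"
  assumes c: "\<nu> + D \<ge> 0" and I0: "I0 \<ge> 0"
    and b: "continuous_on {0..} \<beta>" "\<And>a. a \<ge> 0 \<Longrightarrow> 0 \<le> \<beta> a \<and> \<beta> a \<le> 1" and ap: "\<forall>a\<ge>aplus. \<beta> a = 0"
    and p: "p integrable_on {0..}" "\<And>a. a \<ge> 0 \<Longrightarrow> p a \<ge> 0" "integral {0..} p = 1"
    and eta: "\<eta> > 0"
  shows "\<exists>K>0. \<forall>\<kappa>\<ge>K. \<forall>t\<ge>t0. \<bar>Lambda_fn t0 \<nu> D I0 \<beta> p \<kappa> t - I0 * Gamma_fn \<nu> D \<beta> (t-t0)\<bar> \<le> \<eta>"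
proof -
  define e where "e = \<eta> / (2*(I0+1))"
  have e: "e > 0" unfolding e_def using eta I0 by simp
  have b1: "\<And>a. a \<ge> 0 \<Longrightarrow> \<bar>\<beta> a\<bar> \<le> 1" using b(2) by fastforce
  have pa: "p absolutely_integrable_on {0..}" by (rule nonnegative_absolutely_integrable_1[OF p(1)]) (use p(2) in auto)
  obtain d where d: "d > 0" "\<And>u v. u \<ge> 0 \<Longrightarrow> v \<ge> 0 \<Longrightarrow> \<bar>u - v\<bar> < d \<Longrightarrow> \<bar>\<beta> u - \<beta> v\<bar> < e"
    using beta_unif[OF b(1) ap e] by blast
  define cut where "cut = (\<lambda>(n::nat) (b::real). min 1 (max 0 (b - real n)))"
  have cutc: "continuous_on {0..} (cut n)" for n unfolding cut_def by (intro continuous_intros)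
  have cutb: "\<bar>cut n b\<bar> \<le> 1" "cut n b \<ge> 0" for n b unfolding cut_def by auto
  have fi: "(\<lambda>b. cut n b * p b) absolutely_integrable_on {0..}" for n
    by (rule prod_absint[OF cutc _ pa]) (use cutb in auto)
  have f1: "\<And>n. (\<lambda>b. cut n b * p b) integrable_on {0..}" by (rule abs_int_integrable[OF fi])
  have f3: "\<And>n x. x \<in> {0..} \<Longrightarrow> norm (cut n x * p x) \<le> p x"
  proof -
    fix n :: nat and x :: real assume x: "x \<in> {0..}"
    show "norm (cut n x * p x) \<le> p x" using cutb[of n x] p(2)[of x] x
      by (simp add: abs_mult mult_left_le_one_le)
  qed
  have f4: "\<And>x. x \<in> {0..} \<Longrightarrow> (\<lambda>n. cut n x * p x) \<longlonglongrightarrow> 0"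
  proof -
    fix x :: real assume x: "x \<in> {0..}"
    show "(\<lambda>n. cut n x * p x) \<longlonglongrightarrow> 0"
    proof (rule tendsto_eventually)
      show "\<forall>\<^sub>F n in sequentially. cut n x * p x = 0"
      proof (rule eventually_sequentiallyI[of "nat \<lceil>x\<rceil>"])
        fix n assume "nat \<lceil>x\<rceil> \<le> n"
        then have "x \<le> real n" by linarith
        then show "cut n x * p x = 0" unfolding cut_def by simp
      qed
    qed
  qed
  have lim: "(\<lambda>n. integral {0..} (\<lambda>b. cut n b * p b)) \<longlonglongrightarrow> 0"
    using dominated_convergence(2)[OF f1 p(1) f3 f4] by simp
  have "\<forall>\<^sub>F n in sequentially. integral {0..} (\<lambda>b. cut n b * p b) < e"
    using order_tendstoD(2)[OF lim] e by simp
  then obtain N where "\<forall>n\<ge>N. integral {0..} (\<lambda>b. cut n b * p b) < e"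
    unfolding eventually_sequentially by blast
  then obtain n where n: "integral {0..} (\<lambda>b. cut n b * p b) < e" by blast
  define K where "K = 2 * (real n + 1) / d"
  have K: "K > 0" unfolding K_def using d by simp
  show ?thesis
  proof (intro exI[of _ K] conjI allI impI)
    show "K > 0" by (rule K)
    fix \<kappa> t :: real assume k: "K \<le> \<kappa>" and t: "t0 \<le> t"
    have k0: "\<kappa> > 0" using k K by simp
    define s where "s = t - t0"
    have s: "s \<ge> 0" unfolding s_def using t by simp
    define J where "J = integral {0..} (\<lambda>b. \<beta> (b/\<kappa> + s) * p b)"
    have Ji: "(\<lambda>b. \<beta> (b/\<kappa> + s) * p b) integrable_on {0..}"
      by (rule abs_int_integrable[OF Lambda_change(2)[OF k0 s b(1) b1 pa]])
    have pi2: "(\<lambda>b. \<beta> s * p b) integrable_on {0..}" using integrable_on_cmult_left[OF p(1), of "\<beta> s"] by simp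
    have 1: "J - \<beta> s = integral {0..} (\<lambda>b. \<beta> (b/\<kappa> + s) * p b - \<beta> s * p b)"
      unfolding J_def integral_diff[OF Ji pi2] using p(3) by simp
    have 2: "norm (integral {0..} (\<lambda>b. \<beta> (b/\<kappa> + s) * p b - \<beta> s * p b)) \<le> integral {0..} (\<lambda>b. e * p b + cut n b * p b)"
    proof (rule integral_norm_bound_integral[OF integrable_diff[OF Ji pi2]])
      show "(\<lambda>b. e * p b + cut n b * p b) integrable_on {0..}"
        using integrable_on_cmult_left[OF p(1), of e] abs_int_integrable[OF fi] by (intro integrable_add) auto
      fix x :: real assume x: "x \<in> {0..}"
      have px: "p x \<ge> 0" using p(2) x by auto
      have eq: "\<bar>\<beta> (x/\<kappa> + s) * p x - \<beta> s * p x\<bar> = \<bar>\<beta> (x/\<kappa> + s) - \<beta> s\<bar> * p x"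
        using px by (simp add: abs_mult left_diff_distrib[symmetric])
      have "\<bar>\<beta> (x/\<kappa> + s) - \<beta> s\<bar> * p x \<le> e * p x + cut n x * p x"
      proof (cases "x \<le> real n + 1")
        case True
        have "d * K = 2 * (real n + 1)" unfolding K_def using d by simp
        moreover have "d * K \<le> d * \<kappa>" using k d by simp
        ultimately have "x < d * \<kappa>" using True by simp
        then have "x / \<kappa> < d" using k0 by (simp add: divide_less_eq mult.commute)
        then have "\<bar>(x/\<kappa> + s) - s\<bar> < d" using x k0 by simp
        then have "\<bar>\<beta> (x/\<kappa> + s) - \<beta> s\<bar> < e" using d(2)[of "x/\<kappa> + s" s] x s k0 by simp
        then have "\<bar>\<beta> (x/\<kappa> + s) - \<beta> s\<bar> * p x \<le> e * p x" using px by (simp add: mult_right_mono)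
        moreover have "cut n x * p x \<ge> 0" using cutb px by simp
        ultimately show ?thesis by simp
      next
        case False
        then have "cut n x = 1" unfolding cut_def by simp
        moreover have "\<bar>\<beta> (x/\<kappa> + s) - \<beta> s\<bar> \<le> 1"
          using b(2)[of "x/\<kappa> + s"] b(2)[of s] x s k0 by auto
        ultimately have "\<bar>\<beta> (x/\<kappa> + s) - \<beta> s\<bar> * p x \<le> cut n x * p x" using px by (simp add: mult_left_le_one_le)
        moreover have "e * p x \<ge> 0" using e px by simp
        ultimately show ?thesis by simp
      qed
      then show "norm (\<beta> (x/\<kappa> + s) * p x - \<beta> s * p x) \<le> e * p x + cut n x * p x" using eq by simp
    qed
    have 3: "integral {0..} (\<lambda>b. e * p b + cut n b * p b) = e + integral {0..} (\<lambda>b. cut n b * p b)"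
      using integral_add[of "\<lambda>b. e * p b" "{0..}" "\<lambda>b. cut n b * p b"] integrable_on_cmult_left[OF p(1), of e] abs_int_integrable[OF fi] p(3) by simp
    have Jb: "\<bar>J - \<beta> s\<bar> \<le> 2 * e" using 1 2 3 n by simp
    have L: "Lambda_fn t0 \<nu> D I0 \<beta> p \<kappa> t - I0 * Gamma_fn \<nu> D \<beta> (t-t0) = exp (-(\<nu>+D) * s) * I0 * (J - \<beta> s)"
    proof -
      have LC: "integral {0..} (\<lambda>a. \<beta> (a + s) * (I0 * \<kappa> * p (\<kappa> * a))) = I0 * J"
        unfolding J_def by (rule Lambda_change(1)[OF k0 s b(1) b1 pa])
      have "Lambda_fn t0 \<nu> D I0 \<beta> p \<kappa> t = exp (-(\<nu>+D) * s) * (I0 * J)"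
        unfolding Lambda_fn_def s_def[symmetric] LC ..
      moreover have "Gamma_fn \<nu> D \<beta> (t-t0) = exp (-(\<nu>+D) * s) * \<beta> s"
        unfolding Gamma_fn_def s_def[symmetric] ..
      ultimately show ?thesis by (simp add: algebra_simps)
    qed
    have ex: "exp (-(\<nu>+D) * s) \<le> 1" using exp_nonpos_le1[OF c s] by simp
    have "\<bar>Lambda_fn t0 \<nu> D I0 \<beta> p \<kappa> t - I0 * Gamma_fn \<nu> D \<beta> (t-t0)\<bar> = exp (-(\<nu>+D) * s) * (I0 * \<bar>J - \<beta> s\<bar>)"
      unfolding L using I0 by (simp add: abs_mult)
    also have "\<dots> \<le> 1 * (I0 * (2 * e))" using ex Jb I0 by (intro mult_mono mult_left_mono) auto
    also have "\<dots> = \<eta> * (I0 / (I0 + 1))" unfolding e_def using I0 by (simp add: field_simps)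
    also have "\<dots> \<le> \<eta> * 1" using eta I0 by (intro mult_left_mono) auto
    finally show "\<bar>Lambda_fn t0 \<nu> D I0 \<beta> p \<kappa> t - I0 * Gamma_fn \<nu> D \<beta> (t-t0)\<bar> \<le> \<eta>" by simp
  qed
qed



lemma E_diff:
  fixes x y k \<tau> :: "real \<Rightarrow> real"
  assumes par: "\<nu> \<ge> 0" "\<nu> + D \<ge> 0" "\<delta> \<ge> 0" "S0 \<ge> 0" "R0 \<ge> 0" "I0 \<ge> 0"
    and k: "continuous_on {0..} k" "\<And>a. a \<ge> 0 \<Longrightarrow> \<bar>k a\<bar> \<le> 1"
    and tau: "\<bar>\<tau> t\<bar> \<le> \<tau>max"
    and x: "continuous_on {t0..} x" and y: "continuous_on {t0..} y" and t: "t0 \<le> t" "t \<le> T"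
    and K: "K \<ge> 0" "\<And>s. s \<in> {t0..T} \<Longrightarrow> \<bar>x s\<bar> \<le> K" "\<And>s. s \<in> {t0..T} \<Longrightarrow> \<bar>y s\<bar> \<le> K"
    and L2: "\<bar>L2\<bar> \<le> I0"
    and l: "l \<ge> 1" and W: "W \<ge> 0" and b: "\<And>s. s \<in> {t0..t} \<Longrightarrow> \<bar>x s - y s\<bar> \<le> W * exp (l*(s-t0))"
  shows "\<bar>\<tau> t * F_op t0 \<nu> D \<delta> S0 R0 I0 x t * (L1 + integral {0..t-t0} (\<lambda>a. k a * x (t-a)))
          - \<tau> t * F_op t0 \<nu> D \<delta> S0 R0 I0 y t * (L2 + integral {0..t-t0} (\<lambda>a. k a * y (t-a)))\<bar>
        \<le> \<tau>max * (S0 + (T-t0) * (K + \<delta> * (R0 + \<nu> * (T-t0) * (I0 + K*(T-t0))))) * \<bar>L1 - L2\<bar>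
         + \<tau>max * ((S0 + (T-t0) * (K + \<delta> * (R0 + \<nu> * (T-t0) * (I0 + K*(T-t0))))) + (1 + \<delta>*\<nu>) * (I0 + K*(T-t0)))
             * (W * exp (l*(t-t0)) / l)"
proof -
  define CF where "CF = S0 + (T-t0) * (K + \<delta> * (R0 + \<nu> * (T-t0) * (I0 + K*(T-t0))))"
  define Q where "Q = W * exp (l*(t-t0)) / l"
  define Fx where "Fx = F_op t0 \<nu> D \<delta> S0 R0 I0 x t"
  define Fy where "Fy = F_op t0 \<nu> D \<delta> S0 R0 I0 y t"
  define Cx where "Cx = integral {0..t-t0} (\<lambda>a. k a * x (t-a))"
  define Cy where "Cy = integral {0..t-t0} (\<lambda>a. k a * y (t-a))"
  have l0: "l > 0" using l by simp
  have Q0: "Q \<ge> 0" unfolding Q_def using W l0 by simp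
  have Fxb: "\<bar>Fx\<bar> \<le> CF" unfolding Fx_def CF_def by (rule F_bound[OF par x t K(1) K(2)])
  have CF0: "CF \<ge> 0" using Fxb by linarith
  have Cyb: "\<bar>Cy\<bar> \<le> K*(T-t0)"
  proof -
    have "\<bar>Cy\<bar> \<le> K * (t-t0)" unfolding Cy_def by (rule conv_bound[OF k y t(1)]) (use K(3) t in auto)
    also have "\<dots> \<le> K*(T-t0)" using K(1) t by (intro mult_left_mono) auto
    finally show ?thesis .
  qed
  have Cd: "\<bar>Cx - Cy\<bar> \<le> Q" unfolding Cx_def Cy_def Q_def by (rule conv_diff_est[OF k x y t(1) l0 W b])
  have Fd: "\<bar>Fx - Fy\<bar> \<le> (1 + \<delta>*\<nu>) * Q"
  proof -
    have "\<bar>Fx - Fy\<bar> \<le> (1 + \<delta>*\<nu>/l^2) * W * exp (l*(t-t0)) / l"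
      unfolding Fx_def Fy_def by (rule F_diff[OF par(1-3) x y t(1) l0 W b])
    also have "\<dots> = (1 + \<delta>*\<nu>/l^2) * Q" unfolding Q_def by simp
    also have "\<dots> \<le> (1 + \<delta>*\<nu>) * Q"
    proof (rule mult_right_mono[OF _ Q0])
      have "l^2 \<ge> 1" using l by (simp add: one_le_power)
      moreover have "\<delta>*\<nu> \<ge> 0" using par by simp
      ultimately have "\<delta>*\<nu>/l^2 \<le> \<delta>*\<nu>/1" by (intro divide_left_mono) auto
      then have "\<delta>*\<nu>/l^2 \<le> \<delta>*\<nu>" by simp
      then show "1 + \<delta>*\<nu>/l^2 \<le> 1 + \<delta>*\<nu>" by simp
    qed
    finally show ?thesis .
  qed
  have e: "Fx * (L1 + Cx) - Fy * (L2 + Cy) = Fx * (L1 - L2) + Fx * (Cx - Cy) + (Fx - Fy) * (L2 + Cy)"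
    by (simp add: algebra_simps)
  have A: "\<bar>Fx * (L1 - L2)\<bar> \<le> CF * \<bar>L1 - L2\<bar>" unfolding abs_mult by (rule mult_right_mono[OF Fxb abs_ge_zero])
  have B: "\<bar>Fx * (Cx - Cy)\<bar> \<le> CF * Q" unfolding abs_mult by (rule mult_mono[OF Fxb Cd CF0 abs_ge_zero])
  have L2C: "\<bar>L2 + Cy\<bar> \<le> I0 + K*(T-t0)" using L2 Cyb by linarith
  have C: "\<bar>(Fx - Fy) * (L2 + Cy)\<bar> \<le> ((1 + \<delta>*\<nu>) * Q) * (I0 + K*(T-t0))"
    unfolding abs_mult by (rule mult_mono[OF Fd L2C]) (use par Q0 in auto)
  have S: "\<bar>Fx * (L1 + Cx) - Fy * (L2 + Cy)\<bar> \<le> CF * \<bar>L1 - L2\<bar> + (CF + (1 + \<delta>*\<nu>) * (I0 + K*(T-t0))) * Q"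
  proof -
    have "\<bar>Fx * (L1 + Cx) - Fy * (L2 + Cy)\<bar> \<le> \<bar>Fx * (L1 - L2)\<bar> + \<bar>Fx * (Cx - Cy)\<bar> + \<bar>(Fx - Fy) * (L2 + Cy)\<bar>"
      unfolding e by (meson abs_triangle_ineq add_mono order_trans order_refl)
    also have "\<dots> \<le> CF * \<bar>L1 - L2\<bar> + CF * Q + ((1 + \<delta>*\<nu>) * Q) * (I0 + K*(T-t0))"
      using A B C by linarith
    also have "\<dots> = CF * \<bar>L1 - L2\<bar> + (CF + (1 + \<delta>*\<nu>) * (I0 + K*(T-t0))) * Q"
      by (simp add: algebra_simps)
    finally show ?thesis .
  qed
  have "\<bar>\<tau> t * Fx * (L1 + Cx) - \<tau> t * Fy * (L2 + Cy)\<bar> = \<bar>\<tau> t\<bar> * \<bar>Fx * (L1 + Cx) - Fy * (L2 + Cy)\<bar>"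
    by (simp add: abs_mult[symmetric] algebra_simps)
  also have "\<dots> \<le> \<tau>max * (CF * \<bar>L1 - L2\<bar> + (CF + (1 + \<delta>*\<nu>) * (I0 + K*(T-t0))) * Q)"
    by (rule mult_mono[OF tau S]) (use abs_ge_zero[of "\<tau> t"] tau in auto)
  also have "\<dots> = \<tau>max * CF * \<bar>L1 - L2\<bar> + \<tau>max * (CF + (1 + \<delta>*\<nu>) * (I0 + K*(T-t0))) * Q"
    by (simp add: algebra_simps)
  finally show ?thesis unfolding CF_def Q_def Fx_def Fy_def Cx_def Cy_def .
qed

lemma gron:
  fixes x y :: "real \<Rightarrow> real"
  assumes x: "continuous_on {t0..} x" and y: "continuous_on {t0..} y" and T: "t0 \<le> T"
    and A: "A \<ge> 0" and eps: "\<epsilon> \<ge> 0"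
    and H: "\<And>l W t. l \<ge> 1 \<Longrightarrow> W \<ge> 0 \<Longrightarrow> t \<in> {t0..T} \<Longrightarrow>
        (\<And>s. s \<in> {t0..t} \<Longrightarrow> \<bar>x s - y s\<bar> \<le> W * exp (l*(s-t0))) \<Longrightarrow>
        \<bar>x t - y t\<bar> \<le> \<epsilon> + A * (W * exp (l*(t-t0)) / l)"
  shows "\<And>t. t \<in> {t0..T} \<Longrightarrow> \<bar>x t - y t\<bar> \<le> 2 * \<epsilon> * exp ((2*A+1)*(T-t0))"
proof -
  define l where "l = 2*A+1"
  have l: "l \<ge> 1" unfolding l_def using A by simp
  define g where "g = (\<lambda>s. exp (-l*(s-t0)) * \<bar>x s - y s\<bar>)"
  have gc: "continuous_on {t0..T} g" unfolding g_def
    by (intro continuous_intros continuous_on_subset[OF x] continuous_on_subset[OF y]) auto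
  obtain sm where sm: "sm \<in> {t0..T}" "\<And>s. s \<in> {t0..T} \<Longrightarrow> g s \<le> g sm"
    using continuous_attains_sup[OF compact_Icc _ gc] T by auto
  define W where "W = g sm"
  have W0: "W \<ge> 0" unfolding W_def g_def by simp
  have gi: "\<bar>x s - y s\<bar> = g s * exp (l*(s-t0))" for s
  proof -
    have "exp (-l*(s-t0)) * exp (l*(s-t0)) = 1" using exp_minus_inverse[of "l*(s-t0)"] by (simp add: mult.commute)
    then show ?thesis unfolding g_def by (metis mult.assoc mult.commute mult_1)
  qed
  have bnd: "\<bar>x s - y s\<bar> \<le> W * exp (l*(s-t0))" if "s \<in> {t0..T}" for s
    unfolding gi W_def using sm(2)[OF that] by (simp add: mult_right_mono)
  have Hs: "\<bar>x sm - y sm\<bar> \<le> \<epsilon> + A * (W * exp (l*(sm-t0)) / l)"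
    by (rule H[OF l W0 sm(1)]) (use bnd sm in auto)
  define E where "E = exp (l*(sm-t0))"
  have E1: "E \<ge> 1" unfolding E_def using sm(1) l by simp
  have WE: "W * E \<le> \<epsilon> + A * (W * E / l)" using Hs unfolding gi E_def W_def by simp
  have "A * (W * E / l) = (A / l) * (W * E)" by simp
  also have "\<dots> \<le> (1/2) * (W * E)"
  proof (rule mult_right_mono)
    show "A / l \<le> 1/2" unfolding l_def using A by (simp add: divide_le_eq)
    show "W * E \<ge> 0" using W0 E1 by simp
  qed
  finally have "A * (W * E / l) \<le> (1/2) * (W * E)" .
  then have "W * E \<le> 2 * \<epsilon>" using WE by linarith
  moreover have "W \<le> W * E" using W0 E1 by (simp add: mult_le_cancel_left1)
  ultimately have W2: "W \<le> 2 * \<epsilon>" by simp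
  fix t assume t: "t \<in> {t0..T}"
  have "\<bar>x t - y t\<bar> \<le> W * exp (l*(t-t0))" by (rule bnd[OF t])
  also have "\<dots> \<le> 2 * \<epsilon> * exp (l*(T-t0))"
    using W2 W0 t l by (intro mult_mono) auto
  finally show "\<bar>x t - y t\<bar> \<le> 2 * \<epsilon> * exp ((2*A+1)*(T-t0))" unfolding l_def .
qed



theorem theorem3p2:
  fixes t0 \<nu> D \<delta> S0 R0 I0 \<tau>max aplus :: real
    and \<tau> \<beta> p :: "real \<Rightarrow> real"
    and N :: "real \<Rightarrow> real \<Rightarrow> real"
  assumes "\<nu> > 0" "D \<ge> 0" "\<delta> \<ge> 0" "S0 \<ge> 0" "R0 \<ge> 0" "I0 \<ge> 0"
    and tau_cont: "continuous_on {t0..} \<tau>"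
    and tau_nonneg: "\<forall>t\<ge>t0. \<tau> t \<ge> 0"
    and tau_max: "\<tau>max > 0" "\<forall>t\<ge>t0. \<bar>\<tau> t\<bar> \<le> \<tau>max"
    and beta_meas: "set_borel_measurable lborel {0..} \<beta>"
    and beta_cont: "continuous_on {0..} \<beta>"
    and beta_range: "\<forall>a\<ge>0. 0 \<le> \<beta> a \<and> \<beta> a \<le> 1"
    and aplus: "aplus > 0" "\<forall>a\<ge>aplus. \<beta> a = 0"
    and p_nonneg: "\<forall>a\<ge>0. p a \<ge> 0"
    and p_int: "p integrable_on {0..}" "integral {0..} p = 1"
    and N_sol: "\<forall>\<kappa>>0. continuous_on {t0..} (N \<kappa>) \<and>
        (\<forall>t\<ge>t0. \<bar>N \<kappa> t\<bar> \<le> 2 * \<tau>max * S0 * I0) \<and>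
        (\<forall>t\<ge>t0. N \<kappa> t = \<tau> t * F_op t0 \<nu> D \<delta> S0 R0 I0 (N \<kappa>) t *
            (Lambda_fn t0 \<nu> D I0 \<beta> p \<kappa> t +
             integral {0..t - t0} (\<lambda>a. \<beta> a * exp (-(\<nu> + D) * a) * N \<kappa> (t - a))))"
  shows "\<exists>Nlim :: real \<Rightarrow> real.
           (\<forall>t\<ge>t0. ((\<lambda>\<kappa>. N \<kappa> t) \<longlongrightarrow> Nlim t) at_top) \<and>
           (\<forall>a b. t0 \<le> a \<longrightarrow> uniform_limit {a..b} N Nlim at_top) \<and>
           continuous_on {t0..} Nlim \<and>
           (\<forall>t\<ge>t0. Nlim t = \<tau> t * F_op t0 \<nu> D \<delta> S0 R0 I0 Nlim t *
              (I0 * Gamma_fn \<nu> D \<beta> (t - t0) +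
               integral {0..t - t0} (\<lambda>a. Gamma_fn \<nu> D \<beta> a * Nlim (t - a)))) \<and>
           (\<forall>M :: real \<Rightarrow> real. continuous_on {t0..} M \<and>
              (\<forall>t\<ge>t0. M t = \<tau> t * F_op t0 \<nu> D \<delta> S0 R0 I0 M t *
                 (I0 * Gamma_fn \<nu> D \<beta> (t - t0) +
                  integral {0..t - t0} (\<lambda>a. Gamma_fn \<nu> D \<beta> a * M (t - a))))
              \<longrightarrow> (\<forall>t\<ge>t0. M t = Nlim t))"

proof -
  have parl: "\<nu> \<ge> 0" "\<nu> + D \<ge> 0" "\<delta> \<ge> 0" "S0 \<ge> 0" "R0 \<ge> 0" "I0 \<ge> 0" using assms(1-6) by auto
  define k where "k = (\<lambda>a. \<beta> a * exp (-(\<nu>+D)*a))"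
  have b2: "\<And>a. a \<ge> 0 \<Longrightarrow> 0 \<le> \<beta> a \<and> \<beta> a \<le> 1" using beta_range by auto
  have b1: "\<And>a. a \<ge> 0 \<Longrightarrow> \<bar>\<beta> a\<bar> \<le> 1" using b2 by fastforce
  have kc: "continuous_on {0..} k" unfolding k_def by (intro continuous_intros beta_cont)
  have kb: "\<bar>k a\<bar> \<le> 1" if a: "a \<ge> 0" for a
  proof -
    have "\<bar>k a\<bar> = \<bar>\<beta> a\<bar> * exp (-(\<nu>+D)*a)" unfolding k_def by (simp add: abs_mult)
    also have "\<dots> \<le> 1 * 1" using b1[OF a] exp_nonpos_le1[OF parl(2) a] by (intro mult_mono) auto
    finally show ?thesis by simp
  qed
  have pn: "\<And>a. a \<ge> 0 \<Longrightarrow> p a \<ge> 0" using p_nonneg by auto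
  define B where "B = 2 * \<tau>max * S0 * I0"
  have B0: "B \<ge> 0" unfolding B_def using tau_max(1) parl by simp
  have Nc: "\<And>\<kappa>. \<kappa> > 0 \<Longrightarrow> continuous_on {t0..} (N \<kappa>)" using N_sol by blast
  have Nb: "\<And>\<kappa> s. \<kappa> > 0 \<Longrightarrow> s \<ge> t0 \<Longrightarrow> \<bar>N \<kappa> s\<bar> \<le> B" using N_sol unfolding B_def by blast
  have Ne: "\<And>\<kappa> t. \<kappa> > 0 \<Longrightarrow> t \<ge> t0 \<Longrightarrow> N \<kappa> t = \<tau> t * F_op t0 \<nu> D \<delta> S0 R0 I0 (N \<kappa>) t *
            (Lambda_fn t0 \<nu> D I0 \<beta> p \<kappa> t + integral {0..t - t0} (\<lambda>a. k a * N \<kappa> (t - a)))"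
    using N_sol unfolding k_def by blast
  have taub: "\<And>t. t \<ge> t0 \<Longrightarrow> \<bar>\<tau> t\<bar> \<le> \<tau>max" using tau_max by blast
  have Gb: "\<bar>I0 * Gamma_fn \<nu> D \<beta> (t-t0)\<bar> \<le> I0" if t: "t \<ge> t0" for t
  proof -
    have "\<bar>Gamma_fn \<nu> D \<beta> (t-t0)\<bar> = \<bar>k (t-t0)\<bar>" unfolding Gamma_fn_def k_def by (simp add: mult.commute)
    also have "\<dots> \<le> 1" using kb t by simp
    finally show ?thesis using parl(6) mult_left_le[of "\<bar>Gamma_fn \<nu> D \<beta> (t-t0)\<bar>" I0] by (simp add: abs_mult)
  qed
  have Gconv: "\<And>M t. integral {0..t-t0} (\<lambda>a. Gamma_fn \<nu> D \<beta> a * M (t-a)) = integral {0..t-t0} (\<lambda>a. k a * M (t-a))"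
    by (rule integral_cong) (simp add: Gamma_fn_def k_def mult.commute)
  define CF where "CF = (\<lambda>T K. S0 + (T-t0) * (K + \<delta> * (R0 + \<nu> * (T-t0) * (I0 + K*(T-t0)))))"
  define AA where "AA = (\<lambda>T K. \<tau>max * (CF T K + (1 + \<delta>*\<nu>) * (I0 + K*(T-t0))))"
  have CF0: "CF T K \<ge> 0" if "T \<ge> t0" "K \<ge> 0" for T K
    unfolding CF_def using that parl by (intro add_nonneg_nonneg mult_nonneg_nonneg) auto
  have AA0: "AA T K \<ge> 0" if "T \<ge> t0" "K \<ge> 0" for T K
    unfolding AA_def using that parl tau_max(1) CF0[OF that] by (intro add_nonneg_nonneg mult_nonneg_nonneg) auto
  have Ed: "\<bar>\<tau> t * F_op t0 \<nu> D \<delta> S0 R0 I0 x t * (L1 + integral {0..t-t0} (\<lambda>a. k a * x (t-a)))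
          - \<tau> t * F_op t0 \<nu> D \<delta> S0 R0 I0 y t * (L2 + integral {0..t-t0} (\<lambda>a. k a * y (t-a)))\<bar>
        \<le> \<tau>max * CF T K * \<bar>L1 - L2\<bar> + AA T K * (W * exp (l*(t-t0)) / l)"
    if "continuous_on {t0..} x" "continuous_on {t0..} y" "t0 \<le> t" "t \<le> T"
       "K \<ge> 0" "\<And>s. s \<in> {t0..T} \<Longrightarrow> \<bar>x s\<bar> \<le> K" "\<And>s. s \<in> {t0..T} \<Longrightarrow> \<bar>y s\<bar> \<le> K"
       "\<bar>L2\<bar> \<le> I0" "l \<ge> 1" "W \<ge> 0" "\<And>s. s \<in> {t0..t} \<Longrightarrow> \<bar>x s - y s\<bar> \<le> W * exp (l*(s-t0))"
    for x y t T K L1 L2 l W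
  proof -
    note X = E_diff[where \<tau>=\<tau> and t=t and x=x and y=y, OF parl kc kb taub[OF that(3)] that]
    show ?thesis unfolding CF_def AA_def by (rule X)
  qed

  have cauchy: "\<exists>K0>0. \<forall>\<kappa>\<ge>K0. \<forall>\<mu>\<ge>K0. \<forall>t\<in>{t0..T}. \<bar>N \<kappa> t - N \<mu> t\<bar> \<le> \<eta>"
    if T: "T \<ge> t0" and eta: "\<eta> > 0" for T \<eta>
  proof -
    define A where "A = AA T B"
    have A0: "A \<ge> 0" unfolding A_def by (rule AA0[OF T B0])
    define Q where "Q = 2 * (\<tau>max * CF T B) * exp ((2*A+1)*(T-t0))"
    have Q0: "Q \<ge> 0" unfolding Q_def using tau_max(1) CF0[OF T B0] by simp
    define \<eta>2 where "\<eta>2 = \<eta> / (Q + 1)"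
    have eta2: "\<eta>2 > 0" unfolding \<eta>2_def using eta Q0 by simp
    obtain K1 where K1: "K1 > 0" "\<And>\<kappa> t. \<kappa> \<ge> K1 \<Longrightarrow> t \<ge> t0 \<Longrightarrow> \<bar>Lambda_fn t0 \<nu> D I0 \<beta> p \<kappa> t - I0 * Gamma_fn \<nu> D \<beta> (t-t0)\<bar> \<le> \<eta>2/2"
      using Lambda_conv[OF parl(2) parl(6) beta_cont b2 aplus(2) p_int(1) pn p_int(2), of "\<eta>2/2" t0] eta2 by auto
    show ?thesis
    proof (intro exI[of _ K1] conjI allI impI ballI)
      show "K1 > 0" by (rule K1(1))
      fix \<kappa> \<mu> t assume k: "K1 \<le> \<kappa>" and m: "K1 \<le> \<mu>" and t: "t \<in> {t0..T}"
      have k0: "\<kappa> > 0" and m0: "\<mu> > 0" using k m K1(1) by auto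
      have Ld: "\<bar>Lambda_fn t0 \<nu> D I0 \<beta> p \<kappa> s - Lambda_fn t0 \<nu> D I0 \<beta> p \<mu> s\<bar> \<le> \<eta>2" if "s \<ge> t0" for s
        using K1(2)[OF k that] K1(2)[OF m that] by linarith
      have "\<bar>N \<kappa> t - N \<mu> t\<bar> \<le> 2 * (\<tau>max * CF T B * \<eta>2) * exp ((2*A+1)*(T-t0))"
      proof (rule gron[OF Nc[OF k0] Nc[OF m0] T A0 _ _ t])
        show "\<tau>max * CF T B * \<eta>2 \<ge> 0" using tau_max(1) CF0[OF T B0] eta2 by simp
        fix l W s assume l: "l \<ge> 1" and W: "W \<ge> 0" and s: "s \<in> {t0..T}"
          and hyp: "\<And>r. r \<in> {t0..s} \<Longrightarrow> \<bar>N \<kappa> r - N \<mu> r\<bar> \<le> W * exp (l*(r-t0))"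
        have s0: "s \<ge> t0" using s by simp
        have "\<bar>N \<kappa> s - N \<mu> s\<bar> \<le> \<tau>max * CF T B * \<bar>Lambda_fn t0 \<nu> D I0 \<beta> p \<kappa> s - Lambda_fn t0 \<nu> D I0 \<beta> p \<mu> s\<bar> + AA T B * (W * exp (l*(s-t0)) / l)"
        proof (subst Ne[OF k0 s0], subst Ne[OF m0 s0], rule Ed[OF Nc[OF k0] Nc[OF m0] _ _ B0 _ _ _ l W hyp])
          show "t0 \<le> s" "s \<le> T" using s by auto
          show "\<And>r. r \<in> {t0..T} \<Longrightarrow> \<bar>N \<kappa> r\<bar> \<le> B" using Nb[OF k0] by auto
          show "\<And>r. r \<in> {t0..T} \<Longrightarrow> \<bar>N \<mu> r\<bar> \<le> B" using Nb[OF m0] by auto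
          show "\<bar>Lambda_fn t0 \<nu> D I0 \<beta> p \<mu> s\<bar> \<le> I0"
            by (rule Lambda_bound[OF m0 _ parl(2) parl(6) beta_cont b1 p_int(1) pn p_int(2)]) (use s in auto)
        qed (use s in auto)
        also have "\<dots> \<le> \<tau>max * CF T B * \<eta>2 + A * (W * exp (l*(s-t0)) / l)"
          unfolding A_def using Ld[of s] s tau_max(1) CF0[OF T B0] AA0[OF T B0] by (intro add_mono mult_left_mono) auto
        finally show "\<bar>N \<kappa> s - N \<mu> s\<bar> \<le> \<tau>max * CF T B * \<eta>2 + A * (W * exp (l*(s-t0)) / l)" .
      qed
      also have "\<dots> = Q * \<eta>2" unfolding Q_def by simp
      also have "\<dots> = \<eta> * (Q / (Q + 1))" unfolding \<eta>2_def using Q0 by (simp add: field_simps)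
      also have "\<dots> \<le> \<eta> * 1" using Q0 eta by (intro mult_left_mono) auto
      finally show "\<bar>N \<kappa> t - N \<mu> t\<bar> \<le> \<eta>" by simp
    qed
  qed
  define Nlim where "Nlim = (\<lambda>t. lim (\<lambda>n::nat. N (real n) t))"
  have conv_seq: "(\<lambda>n. N (real n) t) \<longlonglongrightarrow> Nlim t" if t: "t \<ge> t0" for t
  proof -
    have "Cauchy (\<lambda>n. N (real n) t)"
    proof (rule CauchyI)
      fix e :: real assume e: "e > 0"
      obtain K0 where K0: "K0 > 0" "\<forall>\<kappa>\<ge>K0. \<forall>\<mu>\<ge>K0. \<forall>s\<in>{t0..t}. \<bar>N \<kappa> s - N \<mu> s\<bar> \<le> e/2"
        using cauchy[OF t, of "e/2"] e by auto
      show "\<exists>M. \<forall>m\<ge>M. \<forall>n\<ge>M. norm (N (real m) t - N (real n) t) < e"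
      proof (intro exI[of _ "nat \<lceil>K0\<rceil>"] allI impI)
        fix m n :: nat assume "nat \<lceil>K0\<rceil> \<le> m" "nat \<lceil>K0\<rceil> \<le> n"
        then have "real m \<ge> K0" "real n \<ge> K0" by linarith+
        then have "\<bar>N (real m) t - N (real n) t\<bar> \<le> e/2" using K0(2) t by auto
        then show "norm (N (real m) t - N (real n) t) < e" using e by simp
      qed
    qed
    then show ?thesis unfolding Nlim_def Cauchy_convergent_iff convergent_LIMSEQ_iff .
  qed
  have unif: "\<exists>K0>0. \<forall>\<kappa>\<ge>K0. \<forall>t\<in>{t0..T}. \<bar>N \<kappa> t - Nlim t\<bar> \<le> \<eta>"
    if T: "T \<ge> t0" and eta: "\<eta> > 0" for T \<eta>
  proof -
    obtain K0 where K0: "K0 > 0" "\<forall>\<kappa>\<ge>K0. \<forall>\<mu>\<ge>K0. \<forall>s\<in>{t0..T}. \<bar>N \<kappa> s - N \<mu> s\<bar> \<le> \<eta>"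
      using cauchy[OF T eta] by auto
    show ?thesis
    proof (intro exI[of _ K0] conjI allI impI ballI)
      show "K0 > 0" by (rule K0(1))
      fix \<kappa> t assume k: "K0 \<le> \<kappa>" and t: "t \<in> {t0..T}"
      have "(\<lambda>n. \<bar>N \<kappa> t - N (real n) t\<bar>) \<longlonglongrightarrow> \<bar>N \<kappa> t - Nlim t\<bar>"
        using conv_seq[of t] t by (intro tendsto_intros) auto
      moreover have "\<exists>M. \<forall>n\<ge>M. \<bar>N \<kappa> t - N (real n) t\<bar> \<le> \<eta>"
      proof (intro exI[of _ "nat \<lceil>K0\<rceil>"] allI impI)
        fix n :: nat assume "nat \<lceil>K0\<rceil> \<le> n"
        then have "real n \<ge> K0" by linarith
        then show "\<bar>N \<kappa> t - N (real n) t\<bar> \<le> \<eta>" using K0(2) k t by auto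
      qed
      ultimately show "\<bar>N \<kappa> t - Nlim t\<bar> \<le> \<eta>" by (rule LIMSEQ_le_const2)
    qed
  qed
  have ptw: "((\<lambda>\<kappa>. N \<kappa> t) \<longlongrightarrow> Nlim t) at_top" if t: "t \<ge> t0" for t
  proof (rule tendstoI)
    fix e :: real assume e: "e > 0"
    obtain K0 where K0: "K0 > 0" "\<forall>\<kappa>\<ge>K0. \<forall>s\<in>{t0..t}. \<bar>N \<kappa> s - Nlim s\<bar> \<le> e/2"
      using unif[OF t, of "e/2"] e by auto
    show "\<forall>\<^sub>F \<kappa> in at_top. dist (N \<kappa> t) (Nlim t) < e"
      unfolding eventually_at_top_linorder
    proof (intro exI[of _ K0] allI impI)
      fix \<kappa> assume "\<kappa> \<ge> K0"
      then have "\<bar>N \<kappa> t - Nlim t\<bar> \<le> e/2" using K0(2) t by auto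
      then show "dist (N \<kappa> t) (Nlim t) < e" using e by (simp add: dist_real_def)
    qed
  qed
  have ul: "uniform_limit {a..b} N Nlim at_top" if a: "t0 \<le> a" for a b
    unfolding uniform_limit_iff
  proof (intro allI impI)
    fix e :: real assume e: "e > 0"
    obtain K0 where K0: "K0 > 0" "\<forall>\<kappa>\<ge>K0. \<forall>s\<in>{t0..max a b}. \<bar>N \<kappa> s - Nlim s\<bar> \<le> e/2"
    proof -
      have "t0 \<le> max a b" using a by linarith
      from unif[OF this, of "e/2"] e show ?thesis using that by auto
    qed
    show "\<forall>\<^sub>F n in at_top. \<forall>x\<in>{a..b}. dist (N n x) (Nlim x) < e"
      unfolding eventually_at_top_linorder
    proof (intro exI[of _ K0] allI impI ballI)
      fix \<kappa> x assume "\<kappa> \<ge> K0" "x \<in> {a..b}"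
      then have "\<bar>N \<kappa> x - Nlim x\<bar> \<le> e/2" using K0(2) a by auto
      then show "dist (N \<kappa> x) (Nlim x) < e" using e by (simp add: dist_real_def)
    qed
  qed
  have Nlc: "continuous_on {t0..} Nlim"
  proof (rule cont_global)
    fix T assume T: "T \<ge> t0"
    show "continuous_on {t0..T} Nlim"
    proof (rule uniform_limit_theorem[OF _ ul[OF order_refl]])
      show "\<forall>\<^sub>F n in at_top. continuous_on {t0..T} (N n)"
        unfolding eventually_at_top_linorder
        by (intro exI[of _ 1] allI impI continuous_on_subset[OF Nc]) auto
    qed simp
  qed
  have Nlb: "\<bar>Nlim t\<bar> \<le> B" if t: "t \<ge> t0" for t
  proof -
    have "(\<lambda>n. \<bar>N (real n) t\<bar>) \<longlonglongrightarrow> \<bar>Nlim t\<bar>" using conv_seq[OF t] by (intro tendsto_intros)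
    moreover have "\<exists>M. \<forall>n\<ge>M. \<bar>N (real n) t\<bar> \<le> B"
      using Nb t by (intro exI[of _ 1]) auto
    ultimately show ?thesis by (rule LIMSEQ_le_const2)
  qed
  have Nleq: "Nlim t = \<tau> t * F_op t0 \<nu> D \<delta> S0 R0 I0 Nlim t *
       (I0 * Gamma_fn \<nu> D \<beta> (t - t0) + integral {0..t - t0} (\<lambda>a. k a * Nlim (t - a)))"
    (is "Nlim t = ?Tg") if t: "t \<ge> t0" for t
  proof -
    have small: "\<bar>Nlim t - ?Tg\<bar> \<le> e" if e: "e > 0" for e
    proof -
      define A where "A = AA t B"
      have A0: "A \<ge> 0" unfolding A_def by (rule AA0[OF t B0])
      define Q1 where "Q1 = \<tau>max * CF t B + 1"
      define Q2 where "Q2 = A * exp (t - t0) + 1"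
      have Q1: "Q1 \<ge> 1" unfolding Q1_def using tau_max(1) CF0[OF t B0] by simp
      have Q2: "Q2 \<ge> 1" unfolding Q2_def using A0 by simp
      define \<eta> where "\<eta> = e / (3 * Q2)"
      define \<eta>' where "\<eta>' = e / (3 * Q1)"
      have eta: "\<eta> > 0" "\<eta>' > 0" unfolding \<eta>_def \<eta>'_def using e Q1 Q2 by auto
      obtain K0 where K0: "K0 > 0" "\<forall>\<kappa>\<ge>K0. \<forall>s\<in>{t0..t}. \<bar>N \<kappa> s - Nlim s\<bar> \<le> \<eta>"
        using unif[OF t eta(1)] by auto
      obtain K1 where K1: "K1 > 0" "\<And>\<kappa> s. \<kappa> \<ge> K1 \<Longrightarrow> s \<ge> t0 \<Longrightarrow> \<bar>Lambda_fn t0 \<nu> D I0 \<beta> p \<kappa> s - I0 * Gamma_fn \<nu> D \<beta> (s-t0)\<bar> \<le> \<eta>'"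
        using Lambda_conv[OF parl(2) parl(6) beta_cont b2 aplus(2) p_int(1) pn p_int(2) eta(2), of t0] by auto
      define \<kappa> where "\<kappa> = max K0 K1"
      have k0: "\<kappa> > 0" unfolding \<kappa>_def using K0 by simp
      have d1: "\<bar>N \<kappa> t - Nlim t\<bar> \<le> \<eta>" using K0(2) t unfolding \<kappa>_def by auto
      have "\<bar>N \<kappa> t - ?Tg\<bar> \<le> \<tau>max * CF t B * \<bar>Lambda_fn t0 \<nu> D I0 \<beta> p \<kappa> t - I0 * Gamma_fn \<nu> D \<beta> (t-t0)\<bar> + AA t B * (\<eta> * exp (1*(t-t0)) / 1)"
      proof (subst Ne[OF k0 t], rule Ed[OF Nc[OF k0] Nlc t order_refl B0])
        show "\<And>r. r \<in> {t0..t} \<Longrightarrow> \<bar>N \<kappa> r\<bar> \<le> B" using Nb[OF k0] by auto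
        show "\<And>r. r \<in> {t0..t} \<Longrightarrow> \<bar>Nlim r\<bar> \<le> B" using Nlb by auto
        show "\<bar>I0 * Gamma_fn \<nu> D \<beta> (t-t0)\<bar> \<le> I0" by (rule Gb[OF t])
        show "\<eta> \<ge> 0" using eta by simp
        fix r assume r: "r \<in> {t0..t}"
        have "\<bar>N \<kappa> r - Nlim r\<bar> \<le> \<eta>" using K0(2) r unfolding \<kappa>_def by auto
        also have "\<dots> \<le> \<eta> * exp (1*(r-t0))" using eta r by simp
        finally show "\<bar>N \<kappa> r - Nlim r\<bar> \<le> \<eta> * exp (1*(r-t0))" .
      qed simp
      also have "\<dots> \<le> \<tau>max * CF t B * \<eta>' + A * exp (t-t0) * \<eta>"
      proof -
        have "\<bar>Lambda_fn t0 \<nu> D I0 \<beta> p \<kappa> t - I0 * Gamma_fn \<nu> D \<beta> (t-t0)\<bar> \<le> \<eta>'"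
          using K1(2)[of \<kappa> t] t unfolding \<kappa>_def by auto
        then have "\<tau>max * CF t B * \<bar>Lambda_fn t0 \<nu> D I0 \<beta> p \<kappa> t - I0 * Gamma_fn \<nu> D \<beta> (t-t0)\<bar> \<le> \<tau>max * CF t B * \<eta>'"
          using tau_max(1) CF0[OF t B0] by (intro mult_left_mono) auto
        then show ?thesis unfolding A_def by simp
      qed
      finally have d2: "\<bar>N \<kappa> t - ?Tg\<bar> \<le> \<tau>max * CF t B * \<eta>' + A * exp (t-t0) * \<eta>" .
      have "\<tau>max * CF t B * \<eta>' \<le> Q1 * \<eta>'" unfolding Q1_def using eta by simp
      also have "\<dots> = e/3" unfolding \<eta>'_def using Q1 by simp
      finally have e1: "\<tau>max * CF t B * \<eta>' \<le> e/3" .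
      have "A * exp (t-t0) * \<eta> \<le> Q2 * \<eta>" unfolding Q2_def using eta by simp
      also have "\<dots> = e/3" unfolding \<eta>_def using Q2 by simp
      finally have e2: "A * exp (t-t0) * \<eta> \<le> e/3" .
      have "\<eta> \<le> Q2 * \<eta>" using Q2 eta by simp
      then have e3: "\<eta> \<le> e/3" unfolding \<eta>_def using Q2 by simp
      show ?thesis using d1 d2 e1 e2 e3 by linarith
    qed
    show ?thesis
    proof (rule ccontr)
      assume "Nlim t \<noteq> ?Tg"
      then have "\<bar>Nlim t - ?Tg\<bar> > 0" by simp
      from small[OF half_gt_zero[OF this]] this show False by simp
    qed
  qed
  show ?thesis
  proof (intro exI[of _ Nlim] conjI allI impI)
    show "\<And>t. t0 \<le> t \<Longrightarrow> ((\<lambda>\<kappa>. N \<kappa> t) \<longlongrightarrow> Nlim t) at_top" by (rule ptw)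
    show "\<And>a b. t0 \<le> a \<Longrightarrow> uniform_limit {a..b} N Nlim at_top" by (rule ul)
    show "continuous_on {t0..} Nlim" by (rule Nlc)
    show "\<And>t. t0 \<le> t \<Longrightarrow> Nlim t = \<tau> t * F_op t0 \<nu> D \<delta> S0 R0 I0 Nlim t *
              (I0 * Gamma_fn \<nu> D \<beta> (t - t0) + integral {0..t - t0} (\<lambda>a. Gamma_fn \<nu> D \<beta> a * Nlim (t - a)))"
      unfolding Gconv by (rule Nleq)
  next
    fix M :: "real \<Rightarrow> real" and t :: real
    assume MH: "continuous_on {t0..} M \<and>
              (\<forall>t\<ge>t0. M t = \<tau> t * F_op t0 \<nu> D \<delta> S0 R0 I0 M t *
                 (I0 * Gamma_fn \<nu> D \<beta> (t - t0) +
                  integral {0..t - t0} (\<lambda>a. Gamma_fn \<nu> D \<beta> a * M (t - a))))"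
      and t: "t0 \<le> t"
    have Mc: "continuous_on {t0..} M" using MH by blast
    have Me: "\<And>s. s \<ge> t0 \<Longrightarrow> M s = \<tau> s * F_op t0 \<nu> D \<delta> S0 R0 I0 M s *
                 (I0 * Gamma_fn \<nu> D \<beta> (s - t0) + integral {0..s - t0} (\<lambda>a. k a * M (s - a)))"
      using MH unfolding Gconv by blast
    have "bounded (M ` {t0..t})"
      by (rule compact_imp_bounded[OF compact_continuous_image[OF continuous_on_subset[OF Mc] compact_Icc]]) auto
    then obtain KM where KM: "\<And>s. s \<in> {t0..t} \<Longrightarrow> \<bar>M s\<bar> \<le> KM"
      unfolding bounded_iff by (metis atLeastAtMost_iff image_eqI real_norm_def)
    define KK where "KK = max KM B"
    have KK0: "KK \<ge> 0" unfolding KK_def using B0 by simp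
    have "\<bar>M t - Nlim t\<bar> \<le> 2 * 0 * exp ((2 * AA t KK + 1)*(t-t0))"
    proof (rule gron[OF Mc Nlc t AA0[OF t KK0] order_refl _ _])
      fix l W s assume l: "l \<ge> 1" and W: "W \<ge> 0" and s: "s \<in> {t0..t}"
        and hyp: "\<And>r. r \<in> {t0..s} \<Longrightarrow> \<bar>M r - Nlim r\<bar> \<le> W * exp (l*(r-t0))"
      have s0: "s \<ge> t0" using s by simp
      have "\<bar>M s - Nlim s\<bar> \<le> \<tau>max * CF t KK * \<bar>I0 * Gamma_fn \<nu> D \<beta> (s - t0) - I0 * Gamma_fn \<nu> D \<beta> (s - t0)\<bar> + AA t KK * (W * exp (l*(s-t0)) / l)"
      proof (subst Me[OF s0], subst Nleq[OF s0], rule Ed[OF Mc Nlc _ _ KK0 _ _ _ l W hyp])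
        show "t0 \<le> s" "s \<le> t" using s by auto
        show "\<And>r. r \<in> {t0..t} \<Longrightarrow> \<bar>M r\<bar> \<le> KK" using KM unfolding KK_def by fastforce
        show "\<And>r. r \<in> {t0..t} \<Longrightarrow> \<bar>Nlim r\<bar> \<le> KK" using Nlb unfolding KK_def by fastforce
        show "\<bar>I0 * Gamma_fn \<nu> D \<beta> (s - t0)\<bar> \<le> I0" using Gb s by auto
      qed (use s in auto)
      then show "\<bar>M s - Nlim s\<bar> \<le> 0 + AA t KK * (W * exp (l*(s-t0)) / l)" by simp
    qed (use t in auto)
    then show "M t = Nlim t" by simp
  qed
qed



end
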